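(* Let $T$ be a real-analytic diffeomorphism of $\mathbb{T}^2$ homotopic to the identity such that the lifts of $T$ and $T^{-1}$ extend to entire maps of $\mathbb{C}^2$, and set $G(\alpha)=T^{-1}\circ R_\alpha\circ T$. Let $p,q$ be coprime integers with $q\ge1$, $p/q\in[0,1]$, let $c\ge0$ and $\Phi(x,y)=\left(x+\frac{1}{2q},\ y+c\sin(2\pi qx)\right)$, and $G'(\alpha)=(\Phi\circ T)^{-1}\circ R_\alpha\circ(\Phi\circ T)$. Then for every $r\ge0$, $\varepsilon>0$ and $\tau\in\mathbb{N}$ there exists an interval $I$ of positive length centered at $p/q$ such that for all $\alpha\in I$, $$\max_{i=0,\dots,\tau}\left|G(\alpha)^i-G'(\alpha)^i\right|_r<\varepsilon .$$
   Context: $R_\alpha(x,y)=(x+\alpha,y)$; $F^i$ denotes the $i$-th iterate. For $r\ge0$, $A^r=\{(x,y)\in\mathbb{C}^2:|\mathrm{Im}\,x|\le r,|\mathrm{Im}\,y|\le r\}$ and for maps $F,G$ of $\mathbb{C}^2$ whose difference is $\mathbb{Z}^2$-periodic, $|F-G|_r=\max_{i=1,2}\sup_{A^r}|F_i-G_i|$. *)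

theory Defs
  imports "HOL-Analysis.Analysis"
begin

type_synonym c2 = "complex \<times> complex"

definition entire2 :: "(c2 \<Rightarrow> c2) \<Rightarrow> bool" where
  "entire2 F \<longleftrightarrow> (\<forall>z. \<exists>L. (F has_derivative L) (at z) \<and>
      (\<forall>c u v. L (c * u, c * v) = (c * fst (L (u, v)), c * snd (L (u, v)))))"

definition real_pt :: "c2 \<Rightarrow> bool" where
  "real_pt z \<longleftrightarrow> Im (fst z) = 0 \<and> Im (snd z) = 0"

text \<open>Lift of a torus map homotopic to the identity: F(z + k) = F(z) + k for k in Z^2.\<close>
definition lift_id_periodic :: "(c2 \<Rightarrow> c2) \<Rightarrow> bool" where
  "lift_id_periodic F \<longleftrightarrow> (\<forall>z (m::int) (n::int).
      F (fst z + of_int m, snd z + of_int n) = (fst (F z) + of_int m, snd (F z) + of_int n))"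

definition Rot :: "real \<Rightarrow> c2 \<Rightarrow> c2" where
  "Rot \<alpha> z = (fst z + complex_of_real \<alpha>, snd z)"

definition strip :: "real \<Rightarrow> c2 set" where
  "strip r = {z. \<bar>Im (fst z)\<bar> \<le> r \<and> \<bar>Im (snd z)\<bar> \<le> r}"

text \<open>|F - G|_r (as an extended real, so it is always defined).\<close>
definition dist_r :: "real \<Rightarrow> (c2 \<Rightarrow> c2) \<Rightarrow> (c2 \<Rightarrow> c2) \<Rightarrow> ereal" where
  "dist_r r F G = max (SUP z\<in>strip r. ereal (cmod (fst (F z) - fst (G z))))
                      (SUP z\<in>strip r. ereal (cmod (snd (F z) - snd (G z))))"

definition Phi :: "int \<Rightarrow> real \<Rightarrow> c2 \<Rightarrow> c2" where
  "Phi q c z = (fst z + complex_of_real (1 / (2 * of_int q)),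
                snd z + complex_of_real c * sin (2 * complex_of_real pi * of_int q * fst z))"

end

theory Submission
  imports Defs
begin

lemma cbox_C: "z \<in> cbox (Complex a b) (Complex c d) \<longleftrightarrow> a \<le> Re z \<and> Re z \<le> c \<and> b \<le> Im z \<and> Im z \<le> d"
  by (auto simp: mem_box Basis_complex_def)

lemma csin_per: "sin (z + 2 * complex_of_real pi * of_int n) = sin z"
proof -
  have "2 * complex_of_real pi * of_int n = of_real (2 * pi * of_int n)" by simp
  then show ?thesis by (simp only: sin_add sin_of_real cos_of_real sin_int_2pin cos_int_2pin) simp
qed

lemma per_shift:
  assumes "lift_id_periodic g"
  shows "g (z + (of_int m, of_int n)) = g z + (of_int m, of_int n)"
  using assms unfolding lift_id_periodic_def by (simp add: plus_prod_def)

lemma lift_uc: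
  assumes cont: "continuous_on UNIV g" and per: "lift_id_periodic g" and e: "e > 0"
  shows "\<exists>d>0. \<forall>x\<in>strip s. \<forall>y. dist x y < d \<longrightarrow> dist (g x) (g y) < e"
proof -
  define B where "B = cbox (Complex (-1) (-s-1)) (Complex 2 (s+1))"
  define K where "K = B \<times> B"
  have "compact K" unfolding K_def B_def by (intro compact_Times compact_cbox)
  hence "uniformly_continuous_on K g" using cont compact_uniformly_continuous continuous_on_subset by blast
  then obtain d where d: "d>0" "\<forall>x\<in>K. \<forall>x'\<in>K. dist x' x < d \<longrightarrow> dist (g x') (g x) < e"
    using e unfolding uniformly_continuous_on_def by metis
  show ?thesis
  proof (intro exI[of _ "min d (1/2)"] conjI ballI allI impI)
    show "min d (1/2) > 0" using d by simp
    fix x y assume x: "x \<in> strip s" and dxy: "dist x y < min d (1/2)"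
    define k :: c2 where "k = (of_int (\<lfloor>Re (fst x)\<rfloor>), of_int (\<lfloor>Re (snd x)\<rfloor>))"
    have n1: "norm (fst x - fst y) < 1/2" "norm (snd x - snd y) < 1/2"
    proof -
      have "x - y = (fst x - fst y, snd x - snd y)" by (simp add: prod_eq_iff)
      then show "norm (fst x - fst y) < 1/2" "norm (snd x - snd y) < 1/2"
      using dxy norm_fst_le[of "fst x - fst y" "snd x - snd y"] norm_snd_le[of "snd x - snd y" "fst x - fst y"]
        by (auto simp: dist_norm)
    qed
    have r1: "\<bar>Re (fst x) - Re (fst y)\<bar> < 1/2" "\<bar>Im (fst x) - Im (fst y)\<bar> < 1/2"
       "\<bar>Re (snd x) - Re (snd y)\<bar> < 1/2" "\<bar>Im (snd x) - Im (snd y)\<bar> < 1/2"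
      using n1 abs_Re_le_cmod[of "fst x - fst y"] abs_Im_le_cmod[of "fst x - fst y"]
        abs_Re_le_cmod[of "snd x - snd y"] abs_Im_le_cmod[of "snd x - snd y"] by auto
    have fl: "of_int \<lfloor>Re (fst x)\<rfloor> \<le> Re (fst x)" "Re (fst x) < of_int \<lfloor>Re (fst x)\<rfloor> + 1"
      "of_int \<lfloor>Re (snd x)\<rfloor> \<le> Re (snd x)" "Re (snd x) < of_int \<lfloor>Re (snd x)\<rfloor> + 1" by auto
    have xs: "\<bar>Im (fst x)\<bar> \<le> s" "\<bar>Im (snd x)\<bar> \<le> s" using x by (auto simp: strip_def)
    have xK: "x - k \<in> K" using fl xs unfolding K_def B_def k_def
      by (auto simp: cbox_C mem_Times_iff abs_less_iff abs_le_iff simp del: real_of_int_floor_add_one_gt of_int_floor_le)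
    have yK: "y - k \<in> K" using fl xs r1 unfolding K_def B_def k_def
      by (auto simp: cbox_C mem_Times_iff abs_less_iff abs_le_iff simp del: real_of_int_floor_add_one_gt of_int_floor_le; arith)
    have gx: "g x = g (x - k) + k" "g y = g (y - k) + k"
      using per_shift[OF per, of "x - k" "\<lfloor>Re (fst x)\<rfloor>" "\<lfloor>Re (snd x)\<rfloor>"] per_shift[OF per, of "y - k" "\<lfloor>Re (fst x)\<rfloor>" "\<lfloor>Re (snd x)\<rfloor>"] unfolding k_def by auto
    have "dist (x - k) (y - k) < d" using dxy by (simp add: dist_norm)
    then have "dist (g (x - k)) (g (y - k)) < e" using d xK yK by blast
    then show "dist (g x) (g y) < e" using gx by simp
  qed
qed

lemma lift_bd:
  assumes cont: "continuous_on UNIV g" and per: "lift_id_periodic g"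
  shows "\<exists>s'. \<forall>z\<in>strip s. g z \<in> strip s'"
proof -
  define B where "B = cbox (Complex 0 (-s)) (Complex 1 s)"
  define K where "K = B \<times> B"
  have "compact K" unfolding K_def B_def by (intro compact_Times compact_cbox)
  moreover have "continuous_on K (\<lambda>z. g z - z)"
    by (intro continuous_intros continuous_on_subset[OF cont]) auto
  ultimately have "compact ((\<lambda>z. g z - z) ` K)" by (rule compact_continuous_image[rotated])
  then obtain M where M: "\<forall>w\<in>(\<lambda>z. g z - z) ` K. norm w \<le> M"
    using compact_imp_bounded bounded_iff by metis
  show ?thesis
  proof (intro exI[of _ "M + s"] ballI)
    fix x assume x: "x \<in> strip s"
    define k :: c2 where "k = (of_int (\<lfloor>Re (fst x)\<rfloor>), of_int (\<lfloor>Re (snd x)\<rfloor>))"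
    have fl: "of_int \<lfloor>Re (fst x)\<rfloor> \<le> Re (fst x)" "Re (fst x) < of_int \<lfloor>Re (fst x)\<rfloor> + 1"
      "of_int \<lfloor>Re (snd x)\<rfloor> \<le> Re (snd x)" "Re (snd x) < of_int \<lfloor>Re (snd x)\<rfloor> + 1" by auto
    have xs: "\<bar>Im (fst x)\<bar> \<le> s" "\<bar>Im (snd x)\<bar> \<le> s" using x by (auto simp: strip_def)
    have xK: "x - k \<in> K" using fl xs unfolding K_def B_def k_def
      by (auto simp: cbox_C mem_Times_iff abs_less_iff abs_le_iff simp del: real_of_int_floor_add_one_gt of_int_floor_le)
    have gx: "g x = g (x - k) + k"
      using per_shift[OF per, of "x - k" "\<lfloor>Re (fst x)\<rfloor>" "\<lfloor>Re (snd x)\<rfloor>"] unfolding k_def by auto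
    define w where "w = g (x - k) - (x - k)"
    have nw: "norm w \<le> M" using M xK unfolding w_def by blast
    have gxw: "g x = w + x" using gx unfolding w_def by simp
    have "\<bar>Im (fst w)\<bar> \<le> M" "\<bar>Im (snd w)\<bar> \<le> M"
      using nw abs_Im_le_cmod[of "fst w"] abs_Im_le_cmod[of "snd w"]
        norm_fst_le[of "fst w" "snd w"] norm_snd_le[of "snd w" "fst w"] by auto
    then show "g x \<in> strip (M + s)" using xs gxw by (auto simp: strip_def)
  qed
qed


lemma Rot_add: "Rot \<alpha> z = z + (complex_of_real \<alpha>, 0)"
  by (simp add: Rot_def plus_prod_def)

lemma Rot_strip: "Rot \<alpha> z \<in> strip s \<longleftrightarrow> z \<in> strip s"
  by (simp add: Rot_def strip_def)

lemma Rot_dist: "dist (Rot \<alpha> x) (Rot \<alpha> y) = dist x y"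
  by (simp add: Rot_add)

lemma strip_mono: "z \<in> strip a \<Longrightarrow> a \<le> b \<Longrightarrow> z \<in> strip b"
  by (auto simp: strip_def)

lemma strip_near:
  assumes "x \<in> strip a" "dist x y \<le> b" shows "y \<in> strip (a + b)"
proof -
  have "cmod (fst x - fst y) \<le> b" "cmod (snd x - snd y) \<le> b"
    using assms(2) dist_fst_le[of x y] dist_snd_le[of x y] by (auto simp: dist_norm)
  then have "\<bar>Im (fst x) - Im (fst y)\<bar> \<le> b" "\<bar>Im (snd x) - Im (snd y)\<bar> \<le> b"
    using abs_Im_le_cmod[of "fst x - fst y"] abs_Im_le_cmod[of "snd x - snd y"] by auto
  then show ?thesis using assms(1) by (auto simp: strip_def)
qed

lemma fst_dist_le: "cmod (fst a - fst b) \<le> dist a b"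
  using dist_fst_le[of a b] by (simp add: dist_norm)
lemma snd_dist_le: "cmod (snd a - snd b) \<le> dist a b"
  using dist_snd_le[of a b] by (simp add: dist_norm)

definition PhiI :: "int \<Rightarrow> real \<Rightarrow> c2 \<Rightarrow> c2" where
  "PhiI q c w = (fst w - complex_of_real (1 / (2 * of_int q)),
     snd w - complex_of_real c * sin (2 * complex_of_real pi * of_int q * (fst w - complex_of_real (1 / (2 * of_int q)))))"

lemma inv_Phi: "inv (Phi q c) = PhiI q c"
  by (rule inv_equality) (simp_all add: Phi_def PhiI_def prod_eq_iff)

definition gS :: "int \<Rightarrow> real \<Rightarrow> c2 \<Rightarrow> c2" where
  "gS q c w = (fst w, snd w + complex_of_real c * sin (2 * complex_of_real pi * of_int q * fst w))"

lemma gS_cont: "continuous_on UNIV (gS q c)"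
  unfolding gS_def by (intro continuous_intros)

lemma gS_per: "lift_id_periodic (gS q c)"
  unfolding lift_id_periodic_def gS_def
proof (intro allI)
  fix z :: c2 and m n :: int
  have "2 * complex_of_real pi * of_int q * (fst z + of_int m) =
        2 * complex_of_real pi * of_int q * fst z + 2 * complex_of_real pi * of_int (q * m)"
    by (simp add: algebra_simps)
  note eq = this
  show "(fst (fst z + of_int m, snd z + of_int n),
          snd (fst z + of_int m, snd z + of_int n) +
          complex_of_real c * sin (2 * complex_of_real pi * of_int q * fst (fst z + of_int m, snd z + of_int n))) =
         (fst (fst z, snd z + complex_of_real c * sin (2 * complex_of_real pi * of_int q * fst z)) + of_int m,
          snd (fst z, snd z + complex_of_real c * sin (2 * complex_of_real pi * of_int q * fst z)) + of_int n)"
    by (simp only: fst_conv snd_conv eq csin_per) (simp add: add_ac)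
qed

lemma sinshift:
  assumes "q \<noteq> 0"
  shows "sin (2 * complex_of_real pi * of_int q * (w + complex_of_real \<alpha>)) =
         sin (2 * complex_of_real pi * of_int q * (w + complex_of_real (\<alpha> - of_int p / of_int q)))"
proof -
  have "of_int q * complex_of_real (of_int p / of_int q) = of_int p"
    using assms by (simp add: field_simps)
  note qp = this
  have "2 * complex_of_real pi * of_int q * (w + complex_of_real \<alpha>) =
        2 * complex_of_real pi * of_int q * (w + (complex_of_real \<alpha> - complex_of_real (of_int p / of_int q))) + 2 * complex_of_real pi * (of_int q * complex_of_real (of_int p / of_int q))"
    by algebra
  then have "2 * complex_of_real pi * of_int q * (w + complex_of_real \<alpha>) =
        2 * complex_of_real pi * of_int q * (w + complex_of_real (\<alpha> - of_int p / of_int q)) + 2 * complex_of_real pi * of_int p"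
    by (simp only: qp of_real_diff)
  then show ?thesis by (simp only: csin_per)
qed


lemma psi_close:
  assumes "q \<noteq> 0"
  shows "dist (Rot \<alpha> w) (PhiI q c (Rot \<alpha> (Phi q c w))) \<le>
    dist (gS q c w) (gS q c (w + (complex_of_real (\<alpha> - of_int p / of_int q), 0)))"
proof -
  let ?h = "complex_of_real (\<alpha> - of_int p / of_int q)"
  let ?S = "\<lambda>x. complex_of_real c * sin (2 * complex_of_real pi * of_int q * x)"
  have e1: "fst w + complex_of_real (1 / (2 * of_int q)) + complex_of_real \<alpha> - complex_of_real (1 / (2 * of_int q))
     = fst w + complex_of_real \<alpha>" by simp
  have A: "PhiI q c (Rot \<alpha> (Phi q c w)) = (fst w + complex_of_real \<alpha>, snd w + ?S (fst w) - ?S (fst w + complex_of_real \<alpha>))"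
    by (simp only: PhiI_def Rot_def Phi_def fst_conv snd_conv e1)
  have B: "Rot \<alpha> w - PhiI q c (Rot \<alpha> (Phi q c w)) = (0, ?S (fst w + complex_of_real \<alpha>) - ?S (fst w))"
    unfolding A by (simp add: Rot_def)
  have "dist (Rot \<alpha> w) (PhiI q c (Rot \<alpha> (Phi q c w))) = cmod (?S (fst w + complex_of_real \<alpha>) - ?S (fst w))"
    by (simp only: dist_norm B norm_Pair1)
  also have "\<dots> = cmod (?S (fst w + ?h) - ?S (fst w))"
    using sinshift[OF assms, of "fst w" \<alpha> p] by simp
  also have "\<dots> = cmod (snd (gS q c w) - snd (gS q c (w + (?h, 0))))"
    by (simp add: gS_def norm_minus_commute)
  also have "\<dots> \<le> dist (gS q c w) (gS q c (w + (?h, 0)))" by (rule snd_dist_le)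
  finally show ?thesis .
qed

theorem corollary2p1:
  fixes F H :: "c2 \<Rightarrow> c2" and p q :: int and c r \<epsilon> :: real and \<tau> :: nat
  assumes F_entire: "entire2 F" and H_entire: "entire2 H"
    and F_real: "\<And>z. real_pt z \<Longrightarrow> real_pt (F z)"
    and H_real: "\<And>z. real_pt z \<Longrightarrow> real_pt (H z)"
    and HF: "\<And>z. real_pt z \<Longrightarrow> H (F z) = z"
    and FH: "\<And>z. real_pt z \<Longrightarrow> F (H z) = z"
    and F_lift: "lift_id_periodic F" and H_lift: "lift_id_periodic H"
    and cop: "coprime p q" and q_pos: "q \<ge> 1"
    and pq_range: "0 \<le> real_of_int p / real_of_int q" "real_of_int p / real_of_int q \<le> 1"
    and c_nonneg: "c \<ge> 0"
    and r_nonneg: "r \<ge> 0" and eps_pos: "\<epsilon> > 0"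
  shows "\<exists>\<delta>>0. \<forall>\<alpha>. \<bar>\<alpha> - real_of_int p / real_of_int q\<bar> < \<delta> \<longrightarrow>
           Max ((\<lambda>i. dist_r r ((H \<circ> Rot \<alpha> \<circ> F) ^^ i)
                     ((H \<circ> inv (Phi q c) \<circ> Rot \<alpha> \<circ> Phi q c \<circ> F) ^^ i)) ` {0..\<tau>})
           < ereal \<epsilon>"
proof -
  have qnz: "q \<noteq> 0" using q_pos by simp
  have contF: "continuous_on UNIV F"
  proof -
    have "isCont F z" for z using F_entire unfolding entire2_def by (metis has_derivative_continuous)
    then show ?thesis by (simp add: continuous_at_imp_continuous_on)
  qed
  have contH: "continuous_on UNIV H"
  proof -
    have "isCont H z" for z using H_entire unfolding entire2_def by (metis has_derivative_continuous)
    then show ?thesis by (simp add: continuous_at_imp_continuous_on)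
  qed
  define \<beta> where "\<beta> = real_of_int p / real_of_int q"
  define G where "G = (\<lambda>\<alpha>. H \<circ> Rot \<alpha> \<circ> F)"
  define G' where "G' = (\<lambda>\<alpha>. H \<circ> inv (Phi q c) \<circ> Rot \<alpha> \<circ> Phi q c \<circ> F)"
  have G_ap: "G \<alpha> z = H (Rot \<alpha> (F z))" for \<alpha> z by (simp add: G_def)
  have G'_ap: "G' \<alpha> z = H (PhiI q c (Rot \<alpha> (Phi q c (F z))))" for \<alpha> z by (simp add: G'_def inv_Phi)
  have bound: "\<exists>s'. \<forall>\<alpha> z. z \<in> strip s \<longrightarrow> (G \<alpha> ^^ i) z \<in> strip s'" for i s
  proof (induction i arbitrary: s)
    case 0 show ?case by auto
  next
    case (Suc i)
    obtain s1 where s1: "\<forall>\<alpha> z. z \<in> strip s \<longrightarrow> (G \<alpha> ^^ i) z \<in> strip s1" using Suc.IH by blast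
    obtain s2 where s2: "\<forall>z\<in>strip s1. F z \<in> strip s2" using lift_bd[OF contF F_lift] by blast
    obtain s3 where s3: "\<forall>z\<in>strip s2. H z \<in> strip s3" using lift_bd[OF contH H_lift] by blast
    show ?case
    proof (intro exI allI impI)
      fix \<alpha> z assume "z \<in> strip s"
      then have "(G \<alpha> ^^ i) z \<in> strip s1" using s1 by blast
      then have "Rot \<alpha> (F ((G \<alpha> ^^ i) z)) \<in> strip s2" using s2 Rot_strip by blast
      then show "(G \<alpha> ^^ Suc i) z \<in> strip s3" using s3 by (simp add: G_ap)
    qed
  qed
  have main: "\<forall>s. \<forall>e>0. \<exists>\<delta>>0. \<forall>\<alpha>. \<bar>\<alpha> - \<beta>\<bar> < \<delta> \<longrightarrow> (\<forall>z\<in>strip s. dist ((G \<alpha> ^^ i) z) ((G' \<alpha> ^^ i) z) < e)" for i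
  proof (induction i)
    case 0 show ?case by (auto intro: exI[of _ 1])
  next
    case (Suc i)
    show ?case
    proof (intro allI impI)
      fix s e :: real assume e: "e > 0"
      obtain s' where s': "\<forall>\<alpha> z. z \<in> strip s \<longrightarrow> (G \<alpha> ^^ i) z \<in> strip s'" using bound by blast
      obtain t where t: "\<forall>z\<in>strip (s'+1). F z \<in> strip t" using lift_bd[OF contF F_lift] by blast
      obtain d1 where d1: "d1 > 0" "\<forall>x\<in>strip (t+1). \<forall>y. dist x y < d1 \<longrightarrow> dist (H x) (H y) < e/2"
        using lift_uc[OF contH H_lift, of "e/2" "t+1"] e by auto
      define d1' where "d1' = min d1 1"
      have d1': "d1' > 0" "d1' \<le> d1" "d1' \<le> 1" using d1 by (auto simp: d1'_def)
      obtain d2 where d2: "d2 > 0" "\<forall>x\<in>strip s'. \<forall>y. dist x y < d2 \<longrightarrow> dist (F x) (F y) < d1'"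
        using lift_uc[OF contF F_lift d1'(1), of s'] by auto
      obtain d3 where d3: "d3 > 0" "\<forall>x\<in>strip t. \<forall>y. dist x y < d3 \<longrightarrow> dist (gS q c x) (gS q c y) < d1'"
        using lift_uc[OF gS_cont[of q c] gS_per[of q c] d1'(1), of t] by auto
      obtain \<delta>0 where \<delta>0: "\<delta>0 > 0" "\<forall>\<alpha>. \<bar>\<alpha> - \<beta>\<bar> < \<delta>0 \<longrightarrow> (\<forall>z\<in>strip s. dist ((G \<alpha> ^^ i) z) ((G' \<alpha> ^^ i) z) < min d2 1)"
        using Suc.IH[rule_format, of "min d2 1" s] d2(1) by auto
      show "\<exists>\<delta>>0. \<forall>\<alpha>. \<bar>\<alpha> - \<beta>\<bar> < \<delta> \<longrightarrow> (\<forall>z\<in>strip s. dist ((G \<alpha> ^^ Suc i) z) ((G' \<alpha> ^^ Suc i) z) < e)"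
      proof (intro exI[of _ "min \<delta>0 d3"] conjI allI impI ballI)
        show "min \<delta>0 d3 > 0" using \<delta>0 d3 by simp
        fix \<alpha> z assume \<alpha>: "\<bar>\<alpha> - \<beta>\<bar> < min \<delta>0 d3" and z: "z \<in> strip s"
        define u where "u = (G \<alpha> ^^ i) z"
        define v where "v = (G' \<alpha> ^^ i) z"
        have uv: "dist u v < min d2 1" using \<delta>0 \<alpha> z unfolding u_def v_def by auto
        have u: "u \<in> strip s'" using s' z unfolding u_def by blast
        have v: "v \<in> strip (s'+1)" using strip_near[OF u, of v 1] uv by auto
        have Fu: "F u \<in> strip t" using t strip_mono[OF u, of "s'+1"] by auto
        have Fv: "F v \<in> strip t" using t v by auto
        have "dist (F u) (F v) < d1'" using d2(2) u uv by (meson min_less_iff_conj)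
        then have "dist (Rot \<alpha> (F u)) (Rot \<alpha> (F v)) < d1" using d1' by (simp add: Rot_dist)
        moreover have "Rot \<alpha> (F u) \<in> strip (t+1)" using Fu strip_mono[of "F u" t "t+1"] by (simp add: Rot_strip)
        ultimately have E1: "dist (H (Rot \<alpha> (F u))) (H (Rot \<alpha> (F v))) < e/2" using d1 by blast
        let ?h = "complex_of_real (\<alpha> - \<beta>)"
        have "dist (F v) (F v + (?h, 0)) < d3" using \<alpha> by (simp add: dist_norm abs_minus_commute flip: of_real_diff)
        then have "dist (gS q c (F v)) (gS q c (F v + (?h,0))) < d1'" using d3 Fv by blast
        then have "dist (Rot \<alpha> (F v)) (PhiI q c (Rot \<alpha> (Phi q c (F v)))) < d1'"
          using psi_close[OF qnz, of \<alpha> "F v" c p] unfolding \<beta>_def by linarith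
        then have "dist (Rot \<alpha> (F v)) (PhiI q c (Rot \<alpha> (Phi q c (F v)))) < d1" using d1'(2) by linarith
        moreover have "Rot \<alpha> (F v) \<in> strip (t+1)" using Fv strip_mono[of "F v" t "t+1"] by (simp add: Rot_strip)
        ultimately have E2: "dist (H (Rot \<alpha> (F v))) (H (PhiI q c (Rot \<alpha> (Phi q c (F v))))) < e/2"
          using d1(2) by blast
        have "dist ((G \<alpha> ^^ Suc i) z) ((G' \<alpha> ^^ Suc i) z) = dist (H (Rot \<alpha> (F u))) (H (PhiI q c (Rot \<alpha> (Phi q c (F v)))))"
          by (simp add: u_def v_def G_ap G'_ap)
        also have "\<dots> \<le> dist (H (Rot \<alpha> (F u))) (H (Rot \<alpha> (F v))) + dist (H (Rot \<alpha> (F v))) (H (PhiI q c (Rot \<alpha> (Phi q c (F v)))))"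
          by (rule dist_triangle)
        finally show "dist ((G \<alpha> ^^ Suc i) z) ((G' \<alpha> ^^ Suc i) z) < e" using E1 E2 by linarith
      qed
    qed
  qed
  have unif: "\<exists>\<delta>>0. \<forall>\<alpha>. \<bar>\<alpha> - \<beta>\<bar> < \<delta> \<longrightarrow> (\<forall>i\<le>n. \<forall>z\<in>strip r. dist ((G \<alpha> ^^ i) z) ((G' \<alpha> ^^ i) z) < \<epsilon>/2)" for n
  proof (induction n)
    case 0 show ?case by (intro exI[of _ 1]) (auto simp: eps_pos)
  next
    case (Suc n)
    obtain \<delta>1 where \<delta>1: "\<delta>1 > 0" "\<forall>\<alpha>. \<bar>\<alpha> - \<beta>\<bar> < \<delta>1 \<longrightarrow> (\<forall>i\<le>n. \<forall>z\<in>strip r. dist ((G \<alpha> ^^ i) z) ((G' \<alpha> ^^ i) z) < \<epsilon>/2)"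
      using Suc.IH by blast
    obtain \<delta>2 where \<delta>2: "\<delta>2 > 0" "\<forall>\<alpha>. \<bar>\<alpha> - \<beta>\<bar> < \<delta>2 \<longrightarrow> (\<forall>z\<in>strip r. dist ((G \<alpha> ^^ Suc n) z) ((G' \<alpha> ^^ Suc n) z) < \<epsilon>/2)"
      using main[of "Suc n", rule_format, of "\<epsilon>/2" r] half_gt_zero[OF eps_pos] by blast
    show ?case
    proof (intro exI[of _ "min \<delta>1 \<delta>2"] conjI allI impI ballI)
      show "min \<delta>1 \<delta>2 > 0" using \<delta>1 \<delta>2 by simp
      fix \<alpha> i z assume a: "\<bar>\<alpha> - \<beta>\<bar> < min \<delta>1 \<delta>2" and i: "i \<le> Suc n" and z: "z \<in> strip r"
      show "dist ((G \<alpha> ^^ i) z) ((G' \<alpha> ^^ i) z) < \<epsilon>/2"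
      proof (cases "i \<le> n")
        case True then show ?thesis using \<delta>1 a z by auto
      next
        case False then have "i = Suc n" using i by simp
        then show ?thesis using \<delta>2 a z by auto
      qed
    qed
  qed
  obtain \<delta> where \<delta>: "\<delta> > 0" "\<forall>\<alpha>. \<bar>\<alpha> - \<beta>\<bar> < \<delta> \<longrightarrow> (\<forall>i\<le>\<tau>. \<forall>z\<in>strip r. dist ((G \<alpha> ^^ i) z) ((G' \<alpha> ^^ i) z) < \<epsilon>/2)"
    using unif by blast
  show ?thesis
  proof (intro exI[of _ \<delta>] conjI allI impI)
    show "\<delta> > 0" by fact
    fix \<alpha> assume \<alpha>: "\<bar>\<alpha> - real_of_int p / real_of_int q\<bar> < \<delta>"
    have each: "dist_r r ((H \<circ> Rot \<alpha> \<circ> F) ^^ i) ((H \<circ> inv (Phi q c) \<circ> Rot \<alpha> \<circ> Phi q c \<circ> F) ^^ i) < ereal \<epsilon>"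
      if i: "i \<in> {0..\<tau>}" for i
    proof -
      have D: "dist ((G \<alpha> ^^ i) z) ((G' \<alpha> ^^ i) z) < \<epsilon>/2" if "z \<in> strip r" for z
        using \<delta> \<alpha> i that unfolding \<beta>_def by auto
      have D1: "ereal (cmod (fst ((G \<alpha> ^^ i) z) - fst ((G' \<alpha> ^^ i) z))) \<le> ereal (\<epsilon>/2)" if "z \<in> strip r" for z
        using D[OF that] fst_dist_le[of "(G \<alpha> ^^ i) z" "(G' \<alpha> ^^ i) z"] by simp
      have D2: "ereal (cmod (snd ((G \<alpha> ^^ i) z) - snd ((G' \<alpha> ^^ i) z))) \<le> ereal (\<epsilon>/2)" if "z \<in> strip r" for z
        using D[OF that] snd_dist_le[of "(G \<alpha> ^^ i) z" "(G' \<alpha> ^^ i) z"] by simp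
      have "dist_r r (G \<alpha> ^^ i) (G' \<alpha> ^^ i) \<le> ereal (\<epsilon>/2)"
        unfolding dist_r_def by (intro max.boundedI SUP_least D1 D2)
      also have "\<dots> < ereal \<epsilon>" using eps_pos by simp
      finally show ?thesis by (simp add: G_def G'_def)
    qed
    show "Max ((\<lambda>i. dist_r r ((H \<circ> Rot \<alpha> \<circ> F) ^^ i)
                     ((H \<circ> inv (Phi q c) \<circ> Rot \<alpha> \<circ> Phi q c \<circ> F) ^^ i)) ` {0..\<tau>}) < ereal \<epsilon>"
      by (subst Max_less_iff) (use each in auto)
  qed
qed

end
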